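(* Let $n\ge 5$ be odd. Then $E_n=\{x+2^{n-2}: x\in E_{n-1}\}\cup\{x+2^{n-1}: x\in E_{n-1}\}$; that is, listing $E_n$ in increasing order, one obtains the elements of $E_{n-1}$ each increased by $2^{n-2}$ (in increasing order), immediately followed by the elements of $E_{n-1}$ each increased by $2^{n-1}$ (in increasing order).
   Context: Let $D$ (OEIS A036991) be the set of nonnegative integers $m$ such that, reading the binary expansion of $m$ from the least significant bit to the most significant bit, at every point the number of 1's read so far is at least the number of 0's read so far. For $n\ge1$ let $M_n=2^n-1$ and let the $n$-level be $E_n=D\cap(M_{n-1},M_n]$, i.e. the elements of $D$ whose binary expansion has exactly $n$ digits. *)

theory Defs
  imports Main
begin

fun bin_digits :: "nat \<Rightarrow> nat list" where
  "bin_digits m = (if m = 0 then [] else (m mod 2) # bin_digits (m div 2))"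

text \<open>OEIS A036991: reading from the LSB, every prefix has at least as many 1s as 0s.\<close>
definition inD :: "nat \<Rightarrow> bool" where
  "inD m \<longleftrightarrow> (\<forall>k \<le> length (bin_digits m).
      count_list (take k (bin_digits m)) 0 \<le> count_list (take k (bin_digits m)) 1)"

definition Dset :: "nat set" where
  "Dset = {m. inD m}"

definition Mn :: "nat \<Rightarrow> nat" where
  "Mn n = 2 ^ n - 1"

definition E :: "nat \<Rightarrow> nat set" where
  "E n = Dset \<inter> {Mn (n - 1)<..Mn n}"

end

theory Submission
  imports Defs
begin

declare bin_digits.simps[simp del]

definition good :: "nat list \<Rightarrow> bool" where
  "good ds \<longleftrightarrow> (\<forall>k \<le> length ds. count_list (take k ds) 0 \<le> count_list (take k ds) 1)"

definition dl :: "nat \<Rightarrow> nat \<Rightarrow> nat list" where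
  "dl L m = map (\<lambda>i. m div 2 ^ i mod 2) [0..<L]"

lemma inD_good: "inD m = good (bin_digits m)"
  by (simp add: inD_def good_def)

lemma good_snoc: "good (xs @ [a]) \<longleftrightarrow> good xs \<and> count_list (xs @ [a]) 0 \<le> count_list (xs @ [a]) 1"
proof
  assume g: "good (xs @ [a])"
  have "good xs" unfolding good_def
  proof (intro allI impI)
    fix k assume "k \<le> length xs"
    then show "count_list (take k xs) 0 \<le> count_list (take k xs) 1"
      using g[unfolded good_def, rule_format, of k] by simp
  qed
  moreover have "count_list (xs @ [a]) 0 \<le> count_list (xs @ [a]) 1"
    using g[unfolded good_def, rule_format, of "Suc (length xs)"] by simp
  ultimately show "good xs \<and> count_list (xs @ [a]) 0 \<le> count_list (xs @ [a]) 1" by blast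
next
  assume h: "good xs \<and> count_list (xs @ [a]) 0 \<le> count_list (xs @ [a]) 1"
  show "good (xs @ [a])" unfolding good_def
  proof (intro allI impI)
    fix k assume k: "k \<le> length (xs @ [a])"
    show "count_list (take k (xs @ [a])) 0 \<le> count_list (take k (xs @ [a])) 1"
    proof (cases "k \<le> length xs")
      case True
      then show ?thesis using h[THEN conjunct1, unfolded good_def, rule_format, of k] by simp
    next
      case False
      then have "k = Suc (length xs)" using k by simp
      then show ?thesis using h by simp
    qed
  qed
qed

lemma count01: "set xs \<subseteq> {0,1} \<Longrightarrow> count_list xs (0::nat) + count_list xs 1 = length xs"
  by (induction xs) auto

lemma dl_set: "set (dl L m) \<subseteq> {0,1}"
  unfolding dl_def by auto

lemma dl_Suc: "dl (Suc L) m = dl L m @ [m div 2 ^ L mod 2]"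
  unfolding dl_def by simp

lemma dl_Suc2: "dl (Suc L) m = m mod 2 # dl L (m div 2)"
  unfolding dl_def
  by (simp add: upt_conv_Cons map_Suc_upt[symmetric] del: upt_Suc)
     (simp add: div_mult2_eq)

lemma bin_dl: "2 ^ L \<le> m \<Longrightarrow> m < 2 ^ Suc L \<Longrightarrow> bin_digits m = dl (Suc L) m"
proof (induction L arbitrary: m)
  case 0
  then have "m = 1" by simp
  then show ?case by (simp add: dl_def bin_digits.simps)
next
  case (Suc L)
  have "2 ^ L \<le> m div 2" using Suc.prems(1)
    by (metis div_le_mono nonzero_mult_div_cancel_left power_Suc zero_neq_numeral)
  moreover have "m div 2 < 2 ^ Suc L" using Suc.prems(2) by simp
  ultimately have "bin_digits (m div 2) = dl (Suc L) (m div 2)" using Suc.IH by blast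
  moreover have "m \<noteq> 0" using Suc.prems(1) by (metis le_0_eq power_not_zero zero_neq_numeral)
  ultimately show ?case by (subst bin_digits.simps) (simp add: dl_Suc2[of "Suc L"])
qed

lemma mod_mult_div: "(m::nat) mod (a*b) div a = m div a mod b"
  by (metis add.right_neutral div_mult_self4 mod_by_0 mod_div_trivial
    mod_mult2_eq mod_mult_self2_is_0)

lemma dl_mod: "dl L m = dl L (m mod 2 ^ L)"
  unfolding dl_def
proof (rule map_cong[OF refl])
  fix i assume "i \<in> set [0..<L]"
  then have i: "i < L" by simp
  have "m mod 2 ^ L div 2 ^ i mod 2 = m div 2 ^ i mod 2"
  proof -
    have "(2::nat) ^ L = 2 ^ i * 2 ^ (L - i)" using i by (simp add: power_add[symmetric])
    then have "m mod 2 ^ L div 2 ^ i = m div 2 ^ i mod 2 ^ (L - i)"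
      by (simp add: mod_mult_div)
    moreover have "(2::nat) ^ (L - i) = 2 * 2 ^ (L - i - 1)"
    proof -
      have "L - i = Suc (L - i - 1)" using i by simp
      then show ?thesis by (metis power_Suc)
    qed
    ultimately show ?thesis by (simp add: mod_mult2_eq)
  qed
  then show "m div 2 ^ i mod 2 = m mod 2 ^ L div 2 ^ i mod 2" by simp
qed

lemma E_iff: "n \<ge> 1 \<Longrightarrow> m \<in> E n \<longleftrightarrow> 2 ^ (n - 1) \<le> m \<and> m < 2 ^ n \<and> good (bin_digits m)"
proof -
  assume n: "n \<ge> 1"
  have a: "(2::nat) ^ (n - 1) \<ge> 1" by simp
  have b: "(2::nat) ^ n \<ge> 1" by simp
  have "(2 ^ (n - 1) - 1 < m) = (2 ^ (n - 1) \<le> m)" using a by linarith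
  moreover have "(m \<le> 2 ^ n - 1) = (m < 2 ^ n)" using b by linarith
  ultimately show ?thesis unfolding E_def Dset_def Mn_def inD_good by auto
qed

lemma good_ext:
  assumes L: "odd (length xs)" and s: "set xs \<subseteq> {0,1}" and g: "good xs"
  shows "good (xs @ [b])" "good (xs @ [b, 1])" "good (xs @ [1])"
proof -
  have c: "count_list xs 0 + count_list xs 1 = length xs" using count01[OF s] .
  have "count_list xs 0 \<le> count_list xs 1"
    using g[unfolded good_def, rule_format, of "length xs"] by simp
  moreover obtain k where "length xs = 2 * k + 1" using L by (rule oddE)
  ultimately have lt: "count_list xs 0 + 1 \<le> count_list xs 1" using c by presburger
  show g1: "good (xs @ [b])" unfolding good_snoc using g lt by auto
  show "good (xs @ [b, 1])" using good_snoc[of "xs @ [b]" 1] g1 lt by auto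
  show "good (xs @ [1])" unfolding good_snoc using g lt by auto
qed

lemma bigm:
  assumes "2 ^ Suc L \<le> m" "m < 2 ^ Suc (Suc L)"
  shows "bin_digits m = dl L m @ [m div 2 ^ L mod 2, 1]"
proof -
  have "bin_digits m = dl (Suc (Suc L)) m" using bin_dl assms by blast
  also have "\<dots> = dl L m @ [m div 2 ^ L mod 2, m div 2 ^ Suc L mod 2]" by (simp add: dl_Suc)
  also have "m div 2 ^ Suc L = 1"
  proof -
    have "(2::nat) ^ Suc L div 2 ^ Suc L \<le> m div 2 ^ Suc L" using assms(1) by (rule div_le_mono)
    moreover have "m < 2 * 2 ^ Suc L" using assms(2) by simp
    then have "m div 2 ^ Suc L < 2" by (rule less_mult_imp_div_less)
    ultimately show ?thesis by simp
  qed
  finally show ?thesis by simp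
qed

lemma smallx:
  assumes "2 ^ L \<le> m" "m < 2 ^ Suc L"
  shows "bin_digits m = dl L m @ [1]"
proof -
  have "bin_digits m = dl (Suc L) m" using bin_dl assms by blast
  also have "\<dots> = dl L m @ [m div 2 ^ L mod 2]" by (simp add: dl_Suc)
  also have "m div 2 ^ L = 1"
  proof -
    have "(2::nat) ^ L div 2 ^ L \<le> m div 2 ^ L" using assms(1) by (rule div_le_mono)
    moreover have "m < 2 * 2 ^ L" using assms(2) by simp
    then have "m div 2 ^ L < 2" by (rule less_mult_imp_div_less)
    ultimately show ?thesis by simp
  qed
  finally show ?thesis by simp
qed

lemma good_pre: "good (xs @ ys) \<Longrightarrow> good xs"
  by (induction ys rule: rev_induct) (auto simp: good_snoc simp flip: append_assoc)

lemma bigm_iff: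
  assumes "odd L" "2 ^ Suc L \<le> m" "m < 2 ^ Suc (Suc L)"
  shows "good (bin_digits m) \<longleftrightarrow> good (dl L m)"
proof -
  have "length (dl L m) = L" by (simp add: dl_def)
  then show ?thesis using bigm[OF assms(2,3)] good_ext(2)[OF _ dl_set] good_pre assms(1) by metis
qed

lemma smallx_iff:
  assumes "odd L" "2 ^ L \<le> m" "m < 2 ^ Suc L"
  shows "good (bin_digits m) \<longleftrightarrow> good (dl L m)"
proof -
  have "length (dl L m) = L" by (simp add: dl_def)
  then show ?thesis using smallx[OF assms(2,3)] good_ext(3)[OF _ dl_set] good_pre assms(1) by metis
qed

lemma dl_add: "dl L (x + 2 ^ L * q) = dl L x"
  using dl_mod[of L "x + 2 ^ L * q"] dl_mod[of L x] by simp

theorem proposition7: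
  fixes n :: nat
  assumes "n \<ge> 5" and "odd n"
  shows "E n = (\<lambda>x. x + 2 ^ (n - 2)) ` E (n - 1) \<union> (\<lambda>x. x + 2 ^ (n - 1)) ` E (n - 1)
    \<and> (\<forall>x \<in> E (n - 1). \<forall>y \<in> E (n - 1). x + 2 ^ (n - 2) < y + 2 ^ (n - 1))"
proof -
  define L where "L = n - 2"
  have nL: "n = Suc (Suc L)" using assms(1) unfolding L_def by simp
  have oL: "odd L" using assms(2) nL by simp
  have En: "m \<in> E n \<longleftrightarrow> 2 ^ Suc L \<le> m \<and> m < 2 ^ Suc (Suc L) \<and> good (dl L m)" for m
    using E_iff[of n m] bigm_iff[OF oL, of m] nL by auto
  have En1: "m \<in> E (n - 1) \<longleftrightarrow> 2 ^ L \<le> m \<and> m < 2 ^ Suc L \<and> good (dl L m)" for m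
    using E_iff[of "n - 1" m] smallx_iff[OF oL, of m] nL by auto
  have n2: "n - 2 = L" "n - 1 = Suc L" using nL by auto
  have p: "(2::nat) ^ Suc L = 2 ^ L * 2" "(2::nat) ^ Suc (Suc L) = 2 ^ L * 4" by simp_all
  have A: "E n \<subseteq> (\<lambda>x. x + 2 ^ L) ` E (n - 1) \<union> (\<lambda>x. x + 2 ^ Suc L) ` E (n - 1)"
  proof
    fix m assume m: "m \<in> E n"
    define x where "x = m mod 2 ^ L + 2 ^ L"
    have dx: "dl L x = dl L m"
      unfolding x_def using dl_add[of L "m mod 2 ^ L" 1] dl_mod[of L m] by simp
    have pos: "(0::nat) < 2 ^ L" by simp
    have xr: "2 ^ L \<le> x \<and> x < 2 ^ Suc L" unfolding x_def p
      using pos mod_less_divisor[OF pos, of m] by linarith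
    have x1: "x \<in> E (n - 1)" using En1 xr dx m En by simp
    have q: "m div 2 ^ L = 2 \<or> m div 2 ^ L = 3"
    proof -
      have "2 ^ L * 2 \<le> m" using m En p by simp
      then have "2 ^ L * 2 div 2 ^ L \<le> m div 2 ^ L" by (rule div_le_mono)
      then have "2 \<le> m div 2 ^ L" by simp
      moreover have "m < 4 * 2 ^ L" using m En p by simp
      then have "m div 2 ^ L < 4" by (rule less_mult_imp_div_less)
      ultimately show ?thesis by linarith
    qed
    then show "m \<in> (\<lambda>x. x + 2 ^ L) ` E (n - 1) \<union> (\<lambda>x. x + 2 ^ Suc L) ` E (n - 1)"
    proof
      assume "m div 2 ^ L = 2"
      then have "m div 2 ^ L * 2 ^ L = 2 * 2 ^ L" by simp
      then have "m = x + 2 ^ L" using div_mult_mod_eq[of m "2 ^ L"] unfolding x_def by linarith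
      then show ?thesis using x1 by blast
    next
      assume "m div 2 ^ L = 3"
      then have "m div 2 ^ L * 2 ^ L = 3 * 2 ^ L" by simp
      then have "m = x + 2 ^ Suc L" using div_mult_mod_eq[of m "2 ^ L"] p unfolding x_def by linarith
      then show ?thesis using x1 by blast
    qed
  qed
  have B: "(\<lambda>x. x + 2 ^ L) ` E (n - 1) \<union> (\<lambda>x. x + 2 ^ Suc L) ` E (n - 1) \<subseteq> E n"
  proof
    fix m assume "m \<in> (\<lambda>x. x + 2 ^ L) ` E (n - 1) \<union> (\<lambda>x. x + 2 ^ Suc L) ` E (n - 1)"
    then obtain x q where x: "x \<in> E (n - 1)" and mq: "m = x + 2 ^ L * q" and q: "q = 1 \<or> q = 2"
      by (auto simp: mult.commute)
    have "dl L m = dl L x" using mq dl_add by simp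
    moreover have x2: "2 ^ L \<le> x \<and> x < 2 ^ Suc L \<and> good (dl L x)" using x En1 by blast
    moreover have "2 ^ Suc L \<le> m \<and> m < 2 ^ Suc (Suc L)" using mq q p x2 by auto
    ultimately show "m \<in> E n" using En by simp
  qed
  have C: "\<forall>x \<in> E (n - 1). \<forall>y \<in> E (n - 1). x + 2 ^ L < y + 2 ^ Suc L"
    using En1 p by fastforce
  have eq: "E n = (\<lambda>x. x + 2 ^ L) ` E (n - 1) \<union> (\<lambda>x. x + 2 ^ Suc L) ` E (n - 1)"
    using A B by (rule subset_antisym)
  show ?thesis using eq C unfolding n2 by (rule conjI)
qed

end
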